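(* Let $(X,d)$ be a metric space, $\mu$ a non-atomic Borel measure on $X$, $m$ a Borel measure on $X$ and $0<p<\infty$. If $\rho$ is a $p$-weak upper gradient of a function $f$ and $\varepsilon>0$, then there exists an upper gradient $\rho_\varepsilon$ of $f$ (with respect to $\Gamma^\mu$) such that $\rho_\varepsilon\ge\rho$ and $\|\rho-\rho_\varepsilon\|_{L^p(m)}<\varepsilon$.
   Context: A path is a continuous map $\gamma:[a,b]\to X$; a subpath is a restriction to a subinterval, trivial if that interval is a point; $\mathrm{Im}(\gamma)=\gamma([a,b])$. $\mu$ non-atomic: $\mu(\{x\})=0$ for all $x$. $\Gamma^\mu$ is the set of all non-trivial injective paths $\gamma$ with $0<\mu(\mathrm{Im}(\tilde\gamma))<\infty$ for every non-trivial subpath $\tilde\gamma$. For Borel $g\ge0$, $\int_\gamma g:=\int_{\mathrm{Im}(\gamma)}g\,d\mu$. For $\Gamma\subset\Gamma^\mu$, $\mathrm{Mod}_p(\Gamma)=\inf\int_Xg^p\,dm$ over Borel $g:X\to[0,\infty]$ with $\int_\gamma g\ge1$ for all $\gamma\in\Gamma$; a property holds for $p$-almost every path if the set of paths in $\Gamma^\mu$ where it fails has $p$-modulus zero. A Borel $\rho:X\to[0,\infty]$ is an upper gradient of $f:X\to[-\infty,\infty]$ with respect to $\Gamma^\mu$ if $|f(x)-f(y)|\le\int_\gamma\rho$ for every $\gamma\in\Gamma^\mu$ with endpoints $x,y$ such that $f(x),f(y)$ are finite; it is a $p$-weak upper gradient if $|f(x)-f(y)|\le\int_\gamma\rho$ for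 $p$-almost every $\gamma\in\Gamma^\mu$ with endpoints $x,y$. *)

theory Defs
  imports "HOL-Analysis.Analysis"
begin

text \<open>A path \<gamma>:[a,b] \<rightarrow> X is represented as a triple (a, b, \<gamma>); only the values of \<gamma> on {a..b} matter.\<close>
type_synonym 'a path = "real \<times> real \<times> (real \<Rightarrow> 'a)"

definition path_Im :: "'a path \<Rightarrow> 'a set" where
  "path_Im P = (case P of (a, b, \<gamma>) \<Rightarrow> \<gamma> ` {a..b})"

definition path_start :: "'a path \<Rightarrow> 'a" where
  "path_start P = (case P of (a, b, \<gamma>) \<Rightarrow> \<gamma> a)"

definition path_end :: "'a path \<Rightarrow> 'a" where
  "path_end P = (case P of (a, b, \<gamma>) \<Rightarrow> \<gamma> b)"

definition Gamma_mu :: "'a::metric_space measure \<Rightarrow> 'a path set" where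
  "Gamma_mu \<mu> = {(a, b, \<gamma>). a < b \<and> continuous_on {a..b} \<gamma> \<and> inj_on \<gamma> {a..b} \<and>
     (\<forall>c d. a \<le> c \<and> c < d \<and> d \<le> b \<longrightarrow>
        0 < emeasure \<mu> (\<gamma> ` {c..d}) \<and> emeasure \<mu> (\<gamma> ` {c..d}) < \<infinity>)}"

definition path_integral :: "'a measure \<Rightarrow> ('a \<Rightarrow> ennreal) \<Rightarrow> 'a path \<Rightarrow> ennreal" where
  "path_integral \<mu> g P = set_nn_integral \<mu> (path_Im P) g"

definition epow :: "real \<Rightarrow> ennreal \<Rightarrow> ennreal" where
  "epow p t = (if t = \<infinity> then \<infinity> else ennreal (enn2real t powr p))"

definition p_modulus :: "'a::metric_space measure \<Rightarrow> 'a measure \<Rightarrow> real \<Rightarrow> 'a path set \<Rightarrow> ennreal" where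
  "p_modulus \<mu> m p \<Gamma> =
     (INF g \<in> {g. g \<in> borel_measurable borel \<and> (\<forall>\<gamma>\<in>\<Gamma>. path_integral \<mu> g \<gamma> \<ge> 1)}.
        \<integral>\<^sup>+ x. epow p (g x) \<partial>m)"

definition upper_gradient ::
  "'a::metric_space measure \<Rightarrow> ('a \<Rightarrow> ereal) \<Rightarrow> ('a \<Rightarrow> ennreal) \<Rightarrow> bool" where
  "upper_gradient \<mu> f \<rho> \<longleftrightarrow> \<rho> \<in> borel_measurable borel \<and>
     (\<forall>\<gamma>\<in>Gamma_mu \<mu>. \<bar>f (path_start \<gamma>)\<bar> \<noteq> \<infinity> \<and> \<bar>f (path_end \<gamma>)\<bar> \<noteq> \<infinity> \<longrightarrow>
        \<bar>f (path_start \<gamma>) - f (path_end \<gamma>)\<bar> \<le> enn2ereal (path_integral \<mu> \<rho> \<gamma>))"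

definition p_weak_upper_gradient ::
  "'a::metric_space measure \<Rightarrow> 'a measure \<Rightarrow> real \<Rightarrow> ('a \<Rightarrow> ereal) \<Rightarrow> ('a \<Rightarrow> ennreal) \<Rightarrow> bool" where
  "p_weak_upper_gradient \<mu> m p f \<rho> \<longleftrightarrow> \<rho> \<in> borel_measurable borel \<and>
     p_modulus \<mu> m p {\<gamma>\<in>Gamma_mu \<mu>.
        \<not> (\<bar>f (path_start \<gamma>) - f (path_end \<gamma>)\<bar> \<le> enn2ereal (path_integral \<mu> \<rho> \<gamma>))} = 0"

end

theory Submission
  imports Defs
begin
lemma epow_meas[measurable]: "epow p \<in> borel \<rightarrow>\<^sub>M borel"
  unfolding epow_def by measurable
lemma epow_mono: "s \<le> t \<Longrightarrow> 0 < p \<Longrightarrow> epow p s \<le> epow p t"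
  unfolding epow_def apply (cases s; cases t) apply (auto simp: top_unique intro!: ennreal_leI powr_mono2)
  done
lemma epow_cmult: "0 < c \<Longrightarrow> 0 < p \<Longrightarrow> epow p (ennreal c * t) = ennreal (c powr p) * epow p t"
  unfolding epow_def apply (cases t) apply (auto simp: ennreal_mult_top ennreal_mult[symmetric] powr_mult enn2real_mult)
  done
lemma ennreal_le_suminf: "(f k :: ennreal) \<le> (\<Sum>i. f i)"
  by (metis ennreal_suminf_lessD not_le order_less_irrefl)

lemma epow_SUP:
  fixes a :: "nat \<Rightarrow> ennreal"
  assumes p: "0 < p" and b: "\<And>k. epow p (a k) \<le> S"
  shows "epow p (SUP k. a k) \<le> S"
proof (cases S)
  case top then show ?thesis by simp
next
  case (real s)
  have s0: "0 \<le> s" using real by simp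
  define B where "B = s powr (1/p)"
  have "a k \<le> ennreal B" for k
  proof (cases "a k")
    case top then show ?thesis using b[of k] real unfolding epow_def by (simp add: top_unique)
  next
    case (real r)
    with b[of k] \<open>S = ennreal s\<close> have "r powr p \<le> s" using s0 unfolding epow_def by (auto simp: ennreal_le_iff2) 
    then have "(r powr p) powr (1/p) \<le> s powr (1/p)" using p by (intro powr_mono2) auto
    then show ?thesis using real p unfolding B_def by (simp add: powr_powr)
  qed
  then have "(SUP k. a k) \<le> ennreal B" by (simp add: SUP_le_iff)
  then have "epow p (SUP k. a k) \<le> epow p (ennreal B)" using epow_mono p by blast
  also have "\<dots> = ennreal s" using real p unfolding epow_def B_def by (simp add: powr_powr)
  finally show ?thesis using real by simp
qed

theorem proposition3p5:
  fixes \<mu> m :: "'a::metric_space measure"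
    and p \<epsilon> :: real
    and f :: "'a \<Rightarrow> ereal"
    and \<rho> :: "'a \<Rightarrow> ennreal"
  assumes "sets \<mu> = sets borel"
    and "\<And>x. emeasure \<mu> {x} = 0"
    and "sets m = sets borel"
    and "0 < p"
    and "p_weak_upper_gradient \<mu> m p f \<rho>"
    and "0 < \<epsilon>"
  shows "\<exists>\<rho>\<epsilon>. upper_gradient \<mu> f \<rho>\<epsilon> \<and> (\<forall>x. \<rho> x \<le> \<rho>\<epsilon> x) \<and>
           (\<exists>g. g \<in> borel_measurable borel \<and> (\<forall>x. \<rho>\<epsilon> x = \<rho> x + g x) \<and>
                (\<integral>\<^sup>+ x. epow p (g x) \<partial>m) < ennreal (\<epsilon> powr p))"
proof -
  note p = assms(4)
  define Bad where "Bad = {\<gamma>\<in>Gamma_mu \<mu>.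
        \<not> (\<bar>f (path_start \<gamma>) - f (path_end \<gamma>)\<bar> \<le> enn2ereal (path_integral \<mu> \<rho> \<gamma>))}"
  have rhom: "\<rho> \<in> borel_measurable borel" and mod0: "p_modulus \<mu> m p Bad = 0"
    using assms(5) unfolding p_weak_upper_gradient_def Bad_def by auto
  have mM: "h \<in> borel_measurable m" if "h \<in> borel_measurable borel" for h :: "'a \<Rightarrow> ennreal"
    using that measurable_cong_sets[OF assms(3) refl] by blast
  have mMu: "h \<in> borel_measurable \<mu>" if "h \<in> borel_measurable borel" for h :: "'a \<Rightarrow> ennreal"
    using that measurable_cong_sets[OF assms(1) refl] by blast
  define d where "d k = \<epsilon> powr p / (2^(k+2) * real (Suc k) powr p)" for k :: nat
  have dpos: "0 < d k" for k unfolding d_def using assms(6) by simp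
  have "\<exists>g. g \<in> borel_measurable borel \<and> (\<forall>\<gamma>\<in>Bad. path_integral \<mu> g \<gamma> \<ge> 1) \<and>
      (\<integral>\<^sup>+ x. epow p (g x) \<partial>m) < ennreal (d k)" for k
  proof -
    have "p_modulus \<mu> m p Bad < ennreal (d k)" using mod0 dpos[of k] by simp
    then show ?thesis unfolding p_modulus_def by (auto simp: INF_less_iff)
  qed
  then obtain G where Gm: "\<And>k. G k \<in> borel_measurable borel"
    and Gp: "\<And>k \<gamma>. \<gamma> \<in> Bad \<Longrightarrow> path_integral \<mu> (G k) \<gamma> \<ge> 1"
    and Gi: "\<And>k. (\<integral>\<^sup>+ x. epow p (G k x) \<partial>m) < ennreal (d k)"
    by metis
  define g where "g x = (SUP k. ennreal (real (Suc k)) * G k x)" for x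
  have gm: "g \<in> borel_measurable borel" unfolding g_def using Gm by measurable
  have gBad: "path_integral \<mu> g \<gamma> = \<infinity>" if "\<gamma> \<in> Bad" for \<gamma>
  proof -
    obtain a b c where gam: "\<gamma> = (a, b, c)" by (cases \<gamma>) auto
    have "continuous_on {a..b} c" using that gam unfolding Bad_def Gamma_mu_def by auto
    then have "compact (path_Im \<gamma>)" unfolding gam path_Im_def
      by (simp add: compact_continuous_image)
    then have Sb: "path_Im \<gamma> \<in> sets borel" by (simp add: borel_closed compact_imp_closed)
    have "ennreal (real (Suc k)) \<le> path_integral \<mu> g \<gamma>" for k
    proof -
      have "ennreal (real (Suc k)) \<le> ennreal (real (Suc k)) * path_integral \<mu> (G k) \<gamma>"
        using Gp[OF that, of k] by (metis mult.right_neutral mult_left_mono zero_le)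
      also have "\<dots> = path_integral \<mu> (\<lambda>x. ennreal (real (Suc k)) * G k x) \<gamma>"
        unfolding path_integral_def
        apply (subst nn_integral_cmult[symmetric])
         apply (rule mMu) using Gm Sb apply measurable
        apply (simp add: mult.assoc)
        done
      also have "\<dots> \<le> path_integral \<mu> g \<gamma>"
        unfolding path_integral_def g_def
        by (intro nn_integral_mono mult_right_mono) (auto intro: SUP_upper)
      finally show ?thesis .
    qed
    then show ?thesis
    proof (cases "path_integral \<mu> g \<gamma>")
      case (real r)
      obtain k where "r < real (Suc k)" using reals_Archimedean2 by (metis less_Suc_eq order_less_trans of_nat_less_iff)
      then show ?thesis using \<open>ennreal (real (Suc k)) \<le> path_integral \<mu> g \<gamma>\<close> real
        by (metis ennreal_le_iff leD of_nat_0_le_iff)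
    qed simp
  qed
  define \<rho>e where "\<rho>e x = \<rho> x + g x" for x
  have ug: "upper_gradient \<mu> f \<rho>e"
    unfolding upper_gradient_def
  proof (intro conjI ballI impI)
    show "\<rho>e \<in> borel_measurable borel" unfolding \<rho>e_def using rhom gm by measurable
  next
    fix \<gamma> assume \<gamma>: "\<gamma> \<in> Gamma_mu \<mu>"
    show "\<bar>f (path_start \<gamma>) - f (path_end \<gamma>)\<bar> \<le> enn2ereal (path_integral \<mu> \<rho>e \<gamma>)"
    proof (cases "\<gamma> \<in> Bad")
      case True
      have "path_integral \<mu> g \<gamma> \<le> path_integral \<mu> \<rho>e \<gamma>"
        unfolding path_integral_def \<rho>e_def by (intro nn_integral_mono mult_right_mono) auto
      then have "path_integral \<mu> \<rho>e \<gamma> = \<infinity>" using gBad[OF True] by (simp add: top_unique)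
      then show ?thesis by simp
    next
      case False
      then have "\<bar>f (path_start \<gamma>) - f (path_end \<gamma>)\<bar> \<le> enn2ereal (path_integral \<mu> \<rho> \<gamma>)"
        using \<gamma> unfolding Bad_def by auto
      also have "path_integral \<mu> \<rho> \<gamma> \<le> path_integral \<mu> \<rho>e \<gamma>"
        unfolding path_integral_def \<rho>e_def by (intro nn_integral_mono mult_right_mono) auto
      then have "enn2ereal (path_integral \<mu> \<rho> \<gamma>) \<le> enn2ereal (path_integral \<mu> \<rho>e \<gamma>)"
        by (simp add: less_eq_ennreal.rep_eq)
      finally show ?thesis .
    qed
  qed
  have "(\<integral>\<^sup>+ x. epow p (g x) \<partial>m) \<le> (\<integral>\<^sup>+ x. (\<Sum>k. epow p (ennreal (real (Suc k)) * G k x)) \<partial>m)"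
    unfolding g_def by (intro nn_integral_mono epow_SUP[OF p] ennreal_le_suminf)
  also have "\<dots> = (\<Sum>k. \<integral>\<^sup>+ x. epow p (ennreal (real (Suc k)) * G k x) \<partial>m)"
    by (rule nn_integral_suminf) (rule mM, use Gm in measurable)
  also have "\<dots> = (\<Sum>k. ennreal (real (Suc k) powr p) * \<integral>\<^sup>+ x. epow p (G k x) \<partial>m)"
    apply (intro suminf_cong)
    apply (subst epow_cmult, simp, rule p)
    apply (rule nn_integral_cmult)
    apply (rule mM) using Gm apply measurable
    done
  also have "\<dots> \<le> (\<Sum>k. ennreal (\<epsilon> powr p / 4 * (1/2)^k))"
  proof (intro suminf_le allI)
    fix k
    have "ennreal (real (Suc k) powr p) * \<integral>\<^sup>+ x. epow p (G k x) \<partial>m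
        \<le> ennreal (real (Suc k) powr p) * ennreal (d k)"
      using Gi[of k] by (intro mult_left_mono) auto
    also have "\<dots> = ennreal (\<epsilon> powr p / 4 * (1/2)^k)"
      unfolding d_def by (subst ennreal_mult[symmetric]) (auto simp: field_simps power_add)
    finally show "ennreal (real (Suc k) powr p) * \<integral>\<^sup>+ x. epow p (G k x) \<partial>m
        \<le> ennreal (\<epsilon> powr p / 4 * (1/2)^k)" .
  qed auto
  also have "\<dots> = ennreal (\<epsilon> powr p / 4 * 2)"
  proof -
    have "(\<lambda>k. \<epsilon> powr p / 4 * (1/2)^k) sums (\<epsilon> powr p / 4 * 2)"
      using sums_mult[OF geometric_sums[of "1/2::real"], of "\<epsilon> powr p / 4"] by simp
    then have sm: "summable (\<lambda>k. \<epsilon> powr p / 4 * (1/2)^k)" and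
      sv: "(\<Sum>k. \<epsilon> powr p / 4 * (1/2)^k) = \<epsilon> powr p / 4 * 2" by (auto simp: sums_iff)
    have "(\<Sum>k. ennreal (\<epsilon> powr p / 4 * (1/2)^k)) = ennreal (\<Sum>k. \<epsilon> powr p / 4 * (1/2)^k)"
      by (rule suminf_ennreal2[OF _ sm]) simp
    then show ?thesis by (simp only: sv)
  qed
  also have "\<dots> < ennreal (\<epsilon> powr p)"
    using assms(6) by (subst ennreal_less_iff) auto
  finally have fin: "(\<integral>\<^sup>+ x. epow p (g x) \<partial>m) < ennreal (\<epsilon> powr p)" .
  show ?thesis
    apply (rule exI[of _ \<rho>e])
    using ug fin gm unfolding \<rho>e_def by auto
qed
end
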